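(* Suppose Assumptions 1 and 2 hold and run Algorithm 1 with any $\gamma,\alpha>0$. Then for every $t\in\{1,2,\ldots\}$, $$\|\mathbf{Q}(t)\|\le2\gamma G+\frac{\alpha R^2+2DR+2\gamma^2G^2}{\gamma\epsilon}.$$
   Context: Setting: $n,m$ positive integers; $\mathcal{X}_0\subset\mathbb{R}^n$ is a nonempty compact convex set; $\mathbf{g}=(g_1,\ldots,g_m)^{\mathsf T}:\mathbb{R}^n\to\mathbb{R}^m$ with each $g_k$ convex and continuous; $f^t$, $t=0,1,2,\ldots$, are convex differentiable real functions on (a neighborhood of) $\mathcal{X}_0$. All norms are Euclidean. Assumption 1: there are constants $D,\beta,G,R>0$ with $\|\nabla f^t(\mathbf{x})\|\le D$ for all $\mathbf{x}\in\mathcal{X}_0$ and all $t\ge0$; $\|\mathbf{g}(\mathbf{x})-\mathbf{g}(\mathbf{y})\|\le\beta\|\mathbf{x}-\mathbf{y}\|$ for all $\mathbf{x},\mathbf{y}\in\mathcal{X}_0$; $\|\mathbf{g}(\mathbf{x})\|\le G$ for all $\mathbf{x}\in\mathcal{X}_0$; $\|\mathbf{x}-\mathbf{y}\|\le R$ for all $\mathbf{x},\mathbf{y}\in\mathcal{X}_0$. Assumption 2 (Slater condition): there exist $\epsilon>0$ and $\hat{\mathbf{x}}\in\mathcal{X}_0$ with $g_k(\hat{\mathbf{x}})\le-\epsilon$ for all $k\in\{1,\ldots,m\}$. Algorithm 1 (parameters $\gamma>0,\alpha>0$): let $\tilde{\mathbf{g}}(\mathbf{x})=\gamma\mathbf{g}(\mathbf{x})$.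 Choose any $\mathbf{x}(0)\in\mathcal{X}_0$ and set $Q_k(0)=0$ for all $k$. For each $t=0,1,2,\ldots$: set $Q_k(t+1)=\max\{-\tilde g_k(\mathbf{x}(t)),\,Q_k(t)+\tilde g_k(\mathbf{x}(t))\}$ for $k=1,\ldots,m$, and let $\mathbf{x}(t+1)$ be a minimizer over $\mathbf{x}\in\mathcal{X}_0$ of $[\nabla f^t(\mathbf{x}(t))]^{\mathsf T}(\mathbf{x}-\mathbf{x}(t))+[\mathbf{Q}(t+1)+\tilde{\mathbf{g}}(\mathbf{x}(t))]^{\mathsf T}\tilde{\mathbf{g}}(\mathbf{x})+\alpha\|\mathbf{x}-\mathbf{x}(t)\|^2$, where $\mathbf{Q}(t)=(Q_1(t),\ldots,Q_m(t))^{\mathsf T}$. *)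

theory Defs
  imports "HOL-Analysis.Analysis"
begin

text \<open>Objective minimized in the primal update of Algorithm 1 at step t:
  grad is the gradient of f^t at x(t), Qn = Q(t+1), gamma scales g.\<close>
definition alg1_obj ::
  "real \<Rightarrow> real \<Rightarrow> (real^'n \<Rightarrow> real^'m) \<Rightarrow> real^'n \<Rightarrow> real^'n \<Rightarrow> real^'m \<Rightarrow> real^'n \<Rightarrow> real"
  where "alg1_obj \<gamma> \<alpha> g grad xt Qn y =
     grad \<bullet> (y - xt) + (Qn + \<gamma> *\<^sub>R g xt) \<bullet> (\<gamma> *\<^sub>R g y) + \<alpha> * (norm (y - xt))\<^sup>2"

end

theory Submission
  imports Defs
begin

lemma sq_norm_cart: "(norm (v::real^'m))\<^sup>2 = (\<Sum>i\<in>UNIV. (v$i)\<^sup>2)"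
proof -
  have "(norm v)\<^sup>2 = v \<bullet> v" by (rule power2_norm_eq_inner)
  also have "\<dots> = (\<Sum>i\<in>UNIV. (v$i)\<^sup>2)" unfolding inner_vec_def by (simp add: power2_eq_square)
  finally show ?thesis .
qed

lemma drift_vec:
  fixes q q' a :: "real^'m"
  assumes "\<forall>k. q' $ k = max (- a $ k) (q $ k + a $ k)"
  shows "(norm q')\<^sup>2 \<le> (norm q)\<^sup>2 + 2 * (q \<bullet> a) + 2 * (norm a)\<^sup>2"
proof -
  have c: "(q'$k)\<^sup>2 \<le> (q$k)\<^sup>2 + 2 * (q$k * a$k) + 2 * (a$k)\<^sup>2" for k
  proof -
    have "(q$k + a$k)\<^sup>2 \<ge> 0" by simp
    then show ?thesis using assms[rule_format, of k]
      by (auto simp: max_def power2_eq_square algebra_simps)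
  qed
  have "(norm q')\<^sup>2 = (\<Sum>k\<in>UNIV. (q'$k)\<^sup>2)" by (rule sq_norm_cart)
  also have "\<dots> \<le> (\<Sum>k\<in>UNIV. (q$k)\<^sup>2 + 2 * (q$k * a$k) + 2 * (a$k)\<^sup>2)"
    by (rule sum_mono) (rule c)
  also have "\<dots> = (norm q)\<^sup>2 + 2 * (q \<bullet> a) + 2 * (norm a)\<^sup>2"
    by (simp add: sq_norm_cart inner_vec_def sum.distrib sum_distrib_left)
  finally show ?thesis .
qed

lemma step_vec:
  fixes q q' a :: "real^'m"
  assumes "\<forall>k. q' $ k = max (- a $ k) (q $ k + a $ k)" "\<forall>k. q $ k \<ge> 0"
  shows "norm q' \<le> norm q + norm a"
proof -
  have "norm (q' - q) \<le> norm a"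
  proof (rule norm_le_componentwise_cart)
    fix i show "norm ((q' - q) $ i) \<le> norm (a $ i)"
      using assms(1)[rule_format, of i] assms(2)[rule_format, of i]
      by (auto simp: max_def)
  qed
  moreover have "norm q' \<le> norm q + norm (q' - q)"
    by (metis add.commute diff_add_cancel norm_triangle_ineq)
  ultimately show ?thesis by linarith
qed

lemma slater_vec:
  fixes P h :: "real^'m"
  assumes "\<forall>k. P $ k \<ge> 0" "\<forall>k. h $ k \<le> - e" "e > 0"
  shows "P \<bullet> h \<le> - e * norm P"
proof -
  have "P \<bullet> h = (\<Sum>k\<in>UNIV. P$k * h$k)" by (simp add: inner_vec_def)
  also have "\<dots> \<le> (\<Sum>k\<in>UNIV. - e * P$k)"
  proof (rule sum_mono)
    fix k show "P$k * h$k \<le> - e * P$k"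
      using mult_left_mono[OF assms(2)[rule_format, of k] assms(1)[rule_format, of k]] by (simp add: mult.commute)
  qed
  also have "\<dots> = - e * (\<Sum>k\<in>UNIV. \<bar>P$k\<bar>)"
    using assms(1) by (simp add: sum_distrib_left)
  also have "\<dots> \<le> - e * norm P"
    using norm_le_l1_cart[of P] assms(3) by simp
  finally show ?thesis .
qed

theorem corollary2:
  fixes X0 :: "(real^'n) set"
    and g :: "real^'n \<Rightarrow> real^'m"
    and f :: "nat \<Rightarrow> real^'n \<Rightarrow> real"
    and gradf :: "nat \<Rightarrow> real^'n \<Rightarrow> real^'n"
    and S :: "(real^'n) set"
    and D \<beta> G R \<epsilon> \<gamma> \<alpha> :: real
    and xhat :: "real^'n"
    and x :: "nat \<Rightarrow> real^'n"
    and Q :: "nat \<Rightarrow> real^'m"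
  assumes X0_ne: "X0 \<noteq> {}" and X0_compact: "compact X0" and X0_convex: "convex X0"
    and g_convex: "\<forall>k. convex_on UNIV (\<lambda>z. g z $ k)"
    and g_cont: "\<forall>k. continuous_on UNIV (\<lambda>z. g z $ k)"
    and S_open: "open S" and S_sup: "X0 \<subseteq> S"
    and f_convex: "\<forall>t. convex_on S (f t)"
    and f_grad: "\<forall>t. \<forall>z\<in>S. (f t has_derivative (\<lambda>h. gradf t z \<bullet> h)) (at z)"
    and consts_pos: "D > 0" "\<beta> > 0" "G > 0" "R > 0"
    and grad_bound: "\<forall>t. \<forall>z\<in>X0. norm (gradf t z) \<le> D"
    and g_lip: "\<forall>y\<in>X0. \<forall>z\<in>X0. norm (g y - g z) \<le> \<beta> * norm (y - z)"
    and g_bound: "\<forall>z\<in>X0. norm (g z) \<le> G"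
    and diam: "\<forall>y\<in>X0. \<forall>z\<in>X0. norm (y - z) \<le> R"
    and slater: "\<epsilon> > 0" "xhat \<in> X0" "\<forall>k. g xhat $ k \<le> - \<epsilon>"
    and params: "\<gamma> > 0" "\<alpha> > 0"
    and x0: "x 0 \<in> X0" and Q0: "Q 0 = 0"
    and Q_upd: "\<forall>t k. Q (Suc t) $ k =
                  max (- (\<gamma> * g (x t) $ k)) (Q t $ k + \<gamma> * g (x t) $ k)"
    and x_upd: "\<forall>t. x (Suc t) \<in> X0 \<and>
                  (\<forall>y\<in>X0. alg1_obj \<gamma> \<alpha> g (gradf t (x t)) (x t) (Q (Suc t)) (x (Suc t))
                           \<le> alg1_obj \<gamma> \<alpha> g (gradf t (x t)) (x t) (Q (Suc t)) y)"
  shows "\<forall>t\<ge>1. norm (Q t) \<le> 2 * \<gamma> * G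
           + (\<alpha> * R\<^sup>2 + 2 * D * R + 2 * \<gamma>\<^sup>2 * G\<^sup>2) / (\<gamma> * \<epsilon>)"
proof -
  define gt where "gt t = \<gamma> *\<^sub>R g (x t)" for t
  have xin: "x t \<in> X0" for t
    by (cases t) (use x0 x_upd in auto)
  have gtb: "norm (gt t) \<le> \<gamma> * G" for t
    using g_bound xin[of t] params by (simp add: gt_def mult_left_mono)
  have Qu: "\<forall>k. Q (Suc t) $ k = max (- gt t $ k) (Q t $ k + gt t $ k)" for t
    using Q_upd by (simp add: gt_def)
  have Qnn: "\<forall>k. Q t $ k \<ge> 0" for t
  proof (induction t)
    case 0 then show ?case using Q0 by simp
  next
    case (Suc t) show ?case
    proof
      fix k
      have "Q (Suc t) $ k = max (- gt t $ k) (Q t $ k + gt t $ k)" using Qu[of t] by blast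
      moreover have "Q t $ k \<ge> 0" using Suc by blast
      ultimately show "Q (Suc t) $ k \<ge> 0" by linarith
    qed
  qed
  have Pnn: "\<forall>k. (Q (Suc t) + gt t) $ k \<ge> 0" for t
    using Qu[of t] by auto
  have stepb: "norm (Q (Suc t)) \<le> norm (Q t) + \<gamma> * G" for t
    using step_vec[OF Qu[of t] Qnn[of t]] gtb[of t] by linarith
  define P where "P t = Q (Suc t) + gt t" for t
  have key: "P t \<bullet> gt (Suc t) \<le> D * R + \<alpha> * R\<^sup>2 - \<gamma> * \<epsilon> * norm (P t)" for t
  proof -
    let ?gr = "gradf t (x t)"
    have opt: "alg1_obj \<gamma> \<alpha> g ?gr (x t) (Q (Suc t)) (x (Suc t))
               \<le> alg1_obj \<gamma> \<alpha> g ?gr (x t) (Q (Suc t)) xhat"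
      using x_upd slater(2) by blast
    have e1: "?gr \<bullet> (xhat - x t) - ?gr \<bullet> (x (Suc t) - x t) \<le> D * R"
    proof -
      have "?gr \<bullet> (xhat - x t) - ?gr \<bullet> (x (Suc t) - x t) = ?gr \<bullet> (xhat - x (Suc t))"
        by (simp add: inner_diff_right)
      also have "\<dots> \<le> norm ?gr * norm (xhat - x (Suc t))" by (rule norm_cauchy_schwarz)
      also have "\<dots> \<le> D * R"
        using grad_bound xin diam slater(2) consts_pos by (intro mult_mono) auto
      finally show ?thesis .
    qed
    have e2: "\<alpha> * (norm (xhat - x t))\<^sup>2 \<le> \<alpha> * R\<^sup>2"
      using diam xin slater(2) params by (intro mult_left_mono power_mono) auto
    have e3: "P t \<bullet> (\<gamma> *\<^sub>R g xhat) \<le> \<gamma> * (- \<epsilon> * norm (P t))"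
    proof -
      have "P t \<bullet> g xhat \<le> - \<epsilon> * norm (P t)"
        using slater_vec[of "P t" "g xhat" \<epsilon>] Pnn[of t] slater by (simp add: P_def)
      then show ?thesis using params mult_left_mono[of "P t \<bullet> g xhat" "- \<epsilon> * norm (P t)" \<gamma>] by simp
    qed
    have e4: "0 \<le> \<alpha> * (norm (x (Suc t) - x t))\<^sup>2" using params by simp
    from opt have "?gr \<bullet> (x (Suc t) - x t) + P t \<bullet> gt (Suc t) + \<alpha> * (norm (x (Suc t) - x t))\<^sup>2
       \<le> ?gr \<bullet> (xhat - x t) + P t \<bullet> (\<gamma> *\<^sub>R g xhat) + \<alpha> * (norm (xhat - x t))\<^sup>2"
      by (simp add: alg1_obj_def P_def gt_def)
    with e1 e2 e3 e4 show ?thesis by (simp add: algebra_simps)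
  qed
  define c where "c = \<alpha> * R\<^sup>2 + D * R + 2 * \<gamma>\<^sup>2 * G\<^sup>2"
  define \<theta> where "\<theta> = \<gamma> * G + c / (\<gamma> * \<epsilon>)"
  define B where "B = 2 * \<gamma> * G + (\<alpha> * R\<^sup>2 + 2 * D * R + 2 * \<gamma>\<^sup>2 * G\<^sup>2) / (\<gamma> * \<epsilon>)"
  have ge: "\<gamma> * \<epsilon> > 0" using params slater by simp
  have thB: "\<theta> + \<gamma> * G \<le> B"
  proof -
    have "c \<le> \<alpha> * R\<^sup>2 + 2 * D * R + 2 * \<gamma>\<^sup>2 * G\<^sup>2" using consts_pos by (simp add: c_def)
    then have "c / (\<gamma> * \<epsilon>) \<le> (\<alpha> * R\<^sup>2 + 2 * D * R + 2 * \<gamma>\<^sup>2 * G\<^sup>2) / (\<gamma> * \<epsilon>)"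
      using ge by (simp add: divide_right_mono)
    then show ?thesis by (simp add: \<theta>_def B_def)
  qed
  have cpos: "c \<ge> 0" using consts_pos params by (simp add: c_def)
  have nxt: "norm (Q (Suc (Suc t))) \<le> max (norm (Q (Suc t))) (\<theta> + \<gamma> * G)" for t
  proof (cases "norm (Q (Suc t)) \<ge> \<theta>")
    case True
    have dr: "(norm (Q (Suc (Suc t))))\<^sup>2 \<le> (norm (Q (Suc t)))\<^sup>2 + 2 * (Q (Suc t) \<bullet> gt (Suc t)) + 2 * (norm (gt (Suc t)))\<^sup>2"
      by (rule drift_vec[OF Qu[of "Suc t"]])
    have cs: "- (gt t \<bullet> gt (Suc t)) \<le> \<gamma>\<^sup>2 * G\<^sup>2"
    proof -
      have "- (gt t \<bullet> gt (Suc t)) \<le> norm (gt t) * norm (gt (Suc t))"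
        using norm_cauchy_schwarz[of "- gt t" "gt (Suc t)"] by simp
      also have "\<dots> \<le> (\<gamma> * G) * (\<gamma> * G)" using gtb params consts_pos by (intro mult_mono) auto
      finally show ?thesis by (simp add: power2_eq_square algebra_simps)
    qed
    have qg: "Q (Suc t) \<bullet> gt (Suc t) = P t \<bullet> gt (Suc t) - gt t \<bullet> gt (Suc t)"
      by (simp add: P_def inner_add_left)
    have g2: "(norm (gt (Suc t)))\<^sup>2 \<le> (\<gamma> * G)\<^sup>2"
      using gtb[of "Suc t"] by (intro power_mono) auto
    have nP: "norm (P t) \<ge> norm (Q (Suc t)) - \<gamma> * G"
      using norm_triangle_ineq4[of "P t" "gt t"] gtb[of t] by (simp add: P_def)
    have "c / (\<gamma> * \<epsilon>) \<le> norm (P t)" using True nP by (simp add: \<theta>_def)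
    then have "c \<le> \<gamma> * \<epsilon> * norm (P t)" using ge by (simp add: field_simps)
    then have "(norm (Q (Suc (Suc t))))\<^sup>2 \<le> (norm (Q (Suc t)))\<^sup>2"
      proof -
      have "(\<gamma> * G)\<^sup>2 = \<gamma>\<^sup>2 * G\<^sup>2" by (simp add: power_mult_distrib)
      then show ?thesis using dr cs qg g2 key[of t] \<open>c \<le> \<gamma> * \<epsilon> * norm (P t)\<close> unfolding c_def by linarith
    qed
    then have "norm (Q (Suc (Suc t))) \<le> norm (Q (Suc t))"
      by (rule power2_le_imp_le) simp
    then show ?thesis by simp
  next
    case False
    then show ?thesis using stepb[of "Suc t"] by simp
  qed
  have all: "norm (Q (Suc n)) \<le> B" for n
  proof (induction n)
    case 0
    have "norm (Q (Suc 0)) \<le> \<gamma> * G" using stepb[of 0] Q0 by simp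
    moreover have "\<gamma> * G \<le> \<theta> + \<gamma> * G"
      using cpos ge params consts_pos by (simp add: \<theta>_def)
    ultimately show ?case using thB by linarith
  next
    case (Suc n)
    then show ?case using nxt[of n] thB by simp
  qed
  show ?thesis
  proof (intro allI impI)
    fix t :: nat assume "t \<ge> 1"
    then obtain n where "t = Suc n" by (cases t) auto
    then show "norm (Q t) \<le> 2 * \<gamma> * G
           + (\<alpha> * R\<^sup>2 + 2 * D * R + 2 * \<gamma>\<^sup>2 * G\<^sup>2) / (\<gamma> * \<epsilon>)"
      using all[of n] by (simp add: B_def)
  qed
qed

end
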